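(* Let $r,s,t$ be nonzero reals and $\lambda=(\lambda_k)_{k\ge0}$ a strictly increasing sequence of positive reals with $\lambda_k\to\infty$. For $a=(a_n)\in\omega$ define the matrix $F^\lambda=(f^\lambda_{nk})$ by $$f^\lambda_{nk}=\begin{cases}\left(\dfrac{d_{nk}\lambda_k}{\lambda_k-\lambda_{k-1}}-\dfrac{d_{n,k+1}\lambda_k}{\lambda_{k+1}-\lambda_k}\right)a_n,&k<n,\\[2mm]\dfrac1r\dfrac{\lambda_n}{\lambda_n-\lambda_{n-1}}a_n,&k=n,\\[2mm]0,&k>n,\end{cases}$$ and let $f_1^\lambda=\{a\in\omega:\sup_{K\in\mathcal F}\sum_n|\sum_{k\in K}f^\lambda_{nk}|<\infty\}$ and, for $1<q<\infty$, $f_6^\lambda=\{a\in\omega:\sup_{N\in\mathcal F}\sum_{k=0}^\infty|\sum_{n\in N}f^\lambda_{nk}|^q<\infty\}$. Then (i) $\{c_0^\lambda(\widehat B)\}^\alpha=\{c^\lambda(\widehat B)\}^\alpha=\{\ell_\infty^\lambda(\widehat B)\}^\alpha=f_1^\lambda$; (ii) if $1<p<\infty$ and $\frac1p+\frac1q=1$, then $\{\ell_p^\lambda(\widehat B)\}^\alpha=f_6^\lambda$.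
   Context: $\omega$: all complex sequences indexed by $\mathbb{N}=\{0,1,\dots\}$; $\mathcal F$: the collection of finite subsets of $\mathbb{N}$. Convention: terms with negative subscript are $0$. $D=(d_{nk})$ is the inverse of the lower triangular matrix $B(r,s,t)$ having $r$ on the diagonal, $s$ on the first subdiagonal, $t$ on the second subdiagonal and zeros elsewhere; explicitly $d_{nk}=\frac1r\sum_{v=0}^{n-k}\rho_1^{\,n-k-v}\rho_2^{\,v}$ ($0\le k\le n$), $d_{nk}=0$ ($k>n$), $\rho_{1,2}=\frac{-s\pm\sqrt{s^2-4tr}}{2r}$. With $\widehat W_n(x)=\frac{1}{\lambda_n}\sum_{k=0}^n(\lambda_k-\lambda_{k-1})(rx_k+sx_{k-1}+tx_{k-2})$, for $\mu\in\{c_0,c,\ell_\infty,\ell_p\}$ set $\mu^\lambda(\widehat B)=\{x\in\omega:(\widehat W_n(x))_n\in\mu\}$. The $\alpha$-dual of a sequence space $X$ is $X^\alpha=\{a\in\omega:(a_kx_k)\in\ell_1\text{ for all }x\in X\}$. *)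

theory Defs
  imports "HOL-Analysis.Analysis"
begin

text \<open>Sequences in omega are complex sequences indexed by nat.
  Terms with negative subscript are 0: we encode x_{k-1} via a shift.\<close>

definition shift :: "(nat \<Rightarrow> 'a::zero) \<Rightarrow> nat \<Rightarrow> nat \<Rightarrow> 'a" where
  "shift x j k = (if j \<le> k then x (k - j) else 0)"

definition lam_prev :: "(nat \<Rightarrow> real) \<Rightarrow> nat \<Rightarrow> real" where
  "lam_prev lam k = shift lam 1 k"

definition rho1 :: "real \<Rightarrow> real \<Rightarrow> real \<Rightarrow> complex" where
  "rho1 r s t = (- complex_of_real s + csqrt (complex_of_real (s\<^sup>2 - 4*t*r))) / complex_of_real (2*r)"

definition rho2 :: "real \<Rightarrow> real \<Rightarrow> real \<Rightarrow> complex" where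
  "rho2 r s t = (- complex_of_real s - csqrt (complex_of_real (s\<^sup>2 - 4*t*r))) / complex_of_real (2*r)"

text \<open>Entries of D = B(r,s,t)^{-1}\<close>
definition dmat :: "real \<Rightarrow> real \<Rightarrow> real \<Rightarrow> nat \<Rightarrow> nat \<Rightarrow> complex" where
  "dmat r s t n k = (if k \<le> n then
      (1 / complex_of_real r) * (\<Sum>v=0..n-k. rho1 r s t ^ (n-k-v) * rho2 r s t ^ v)
    else 0)"

definition What :: "real \<Rightarrow> real \<Rightarrow> real \<Rightarrow> (nat \<Rightarrow> real) \<Rightarrow> (nat \<Rightarrow> complex) \<Rightarrow> nat \<Rightarrow> complex" where
  "What r s t lam x n = complex_of_real (1 / lam n) *
     (\<Sum>k=0..n. complex_of_real (lam k - lam_prev lam k) *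
        (complex_of_real r * x k + complex_of_real s * shift x 1 k + complex_of_real t * shift x 2 k))"

definition c0_lam :: "real \<Rightarrow> real \<Rightarrow> real \<Rightarrow> (nat \<Rightarrow> real) \<Rightarrow> (nat \<Rightarrow> complex) set" where
  "c0_lam r s t lam = {x. What r s t lam x \<longlonglongrightarrow> 0}"

definition c_lam :: "real \<Rightarrow> real \<Rightarrow> real \<Rightarrow> (nat \<Rightarrow> real) \<Rightarrow> (nat \<Rightarrow> complex) set" where
  "c_lam r s t lam = {x. convergent (What r s t lam x)}"

definition linf_lam :: "real \<Rightarrow> real \<Rightarrow> real \<Rightarrow> (nat \<Rightarrow> real) \<Rightarrow> (nat \<Rightarrow> complex) set" where
  "linf_lam r s t lam = {x. Bseq (What r s t lam x)}"

definition lp_lam :: "real \<Rightarrow> real \<Rightarrow> real \<Rightarrow> real \<Rightarrow> (nat \<Rightarrow> real) \<Rightarrow> (nat \<Rightarrow> complex) set" where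
  "lp_lam p r s t lam = {x. summable (\<lambda>n. norm (What r s t lam x n) powr p)}"

definition alpha_dual :: "(nat \<Rightarrow> complex) set \<Rightarrow> (nat \<Rightarrow> complex) set" where
  "alpha_dual X = {a. \<forall>x\<in>X. summable (\<lambda>k. norm (a k * x k))}"

definition fmat :: "real \<Rightarrow> real \<Rightarrow> real \<Rightarrow> (nat \<Rightarrow> real) \<Rightarrow> (nat \<Rightarrow> complex) \<Rightarrow> nat \<Rightarrow> nat \<Rightarrow> complex" where
  "fmat r s t lam a n k =
    (if k < n then
       (dmat r s t n k * complex_of_real (lam k / (lam k - lam_prev lam k))
        - dmat r s t n (k+1) * complex_of_real (lam k / (lam (k+1) - lam k))) * a n
     else if k = n then
       complex_of_real ((1 / r) * (lam n / (lam n - lam_prev lam n))) * a n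
     else 0)"

definition f1_lam :: "real \<Rightarrow> real \<Rightarrow> real \<Rightarrow> (nat \<Rightarrow> real) \<Rightarrow> (nat \<Rightarrow> complex) set" where
  "f1_lam r s t lam = {a. \<exists>M. \<forall>K. finite K \<longrightarrow>
      summable (\<lambda>n. norm (\<Sum>k\<in>K. fmat r s t lam a n k)) \<and>
      (\<Sum>n. norm (\<Sum>k\<in>K. fmat r s t lam a n k)) \<le> M}"

definition f6_lam :: "real \<Rightarrow> real \<Rightarrow> real \<Rightarrow> real \<Rightarrow> (nat \<Rightarrow> real) \<Rightarrow> (nat \<Rightarrow> complex) set" where
  "f6_lam q r s t lam = {a. \<exists>M. \<forall>N. finite N \<longrightarrow>
      summable (\<lambda>k. norm (\<Sum>n\<in>N. fmat r s t lam a n k) powr q) \<and>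
      (\<Sum>k. norm (\<Sum>n\<in>N. fmat r s t lam a n k) powr q) \<le> M}"

end

theory Submission
  imports Defs
begin


definition Gapp :: "(nat \<Rightarrow> nat \<Rightarrow> complex) \<Rightarrow> (nat \<Rightarrow> complex) \<Rightarrow> nat \<Rightarrow> complex" where
  "Gapp G y n = (\<Sum>k\<le>n. G n k * y k)"

definition LT :: "(nat \<Rightarrow> nat \<Rightarrow> complex) \<Rightarrow> bool" where
  "LT G \<longleftrightarrow> (\<forall>n k. n < k \<longrightarrow> G n k = 0)"

lemma Gapp_cong: "(\<And>k. k \<le> n \<Longrightarrow> y k = z k) \<Longrightarrow> Gapp G y n = Gapp G z n"
  unfolding Gapp_def by (intro sum.cong) auto

lemma Gapp_add: "Gapp G (\<lambda>k. y k + z k) n = Gapp G y n + Gapp G z n"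
  unfolding Gapp_def by (simp add: distrib_left sum.distrib)

lemma Gapp_cmult: "Gapp G (\<lambda>k. c * y k) n = c * Gapp G y n"
  unfolding Gapp_def by (simp add: sum_distrib_left mult_ac)

lemma Gapp_bound_le:
  assumes "LT G" "\<forall>k>e. y k = 0"
  shows "Gapp G y n = (\<Sum>k\<le>e. G n k * y k)"
proof (cases "n \<le> e")
  case True
  then show ?thesis unfolding Gapp_def
    using assms(1) unfolding LT_def
    by (intro sum.mono_neutral_left) auto
next
  case False
  then show ?thesis unfolding Gapp_def
    using assms(2)
    by (intro sum.mono_neutral_right) auto
qed

lemma Gapp_sum_swap:
  assumes "LT G" "\<forall>k>e. y k = 0"
  shows "(\<Sum>n\<in>N. Gapp G y n) = (\<Sum>k\<le>e. y k * (\<Sum>n\<in>N. G n k))"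
  using Gapp_bound_le[OF assms]
  by (simp add: sum.swap[of _ N] sum_distrib_left mult_ac)

lemma Gapp_norm_le:
  assumes "\<forall>k. norm (y k) \<le> 1"
  shows "norm (Gapp G y n) \<le> (\<Sum>k\<le>n. norm (G n k))"
  unfolding Gapp_def
proof -
  have "norm (\<Sum>k\<le>n. G n k * y k) \<le> (\<Sum>k\<le>n. norm (G n k * y k))" by (rule norm_sum)
  also have "\<dots> \<le> (\<Sum>k\<le>n. norm (G n k))"
    by (intro sum_mono) (simp add: norm_mult mult_left_le assms)
  finally show "norm (\<Sum>k\<le>n. G n k * y k) \<le> (\<Sum>k\<le>n. norm (G n k))" .
qed

lemma Gapp_low_bound:
  assumes "LT G" "\<forall>k>b. y k = 0" "\<forall>k. norm (y k) \<le> 1"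
  shows "norm (\<Sum>n\<in>N. Gapp G y n) \<le> (\<Sum>k\<le>b. \<Sum>n\<in>N. norm (G n k))"
proof -
  have "norm (\<Sum>n\<in>N. Gapp G y n) = norm (\<Sum>k\<le>b. y k * (\<Sum>n\<in>N. G n k))"
    using Gapp_sum_swap[OF assms(1,2)] by simp
  also have "\<dots> \<le> (\<Sum>k\<le>b. norm (y k * (\<Sum>n\<in>N. G n k)))" by (rule norm_sum)
  also have "\<dots> \<le> (\<Sum>k\<le>b. \<Sum>n\<in>N. norm (G n k))"
  proof (intro sum_mono)
    fix k
    have "norm (y k * (\<Sum>n\<in>N. G n k)) \<le> norm (\<Sum>n\<in>N. G n k)"
      by (simp add: norm_mult mult_left_le_one_le assms(3))
    also have "\<dots> \<le> (\<Sum>n\<in>N. norm (G n k))" by (rule norm_sum)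
    finally show "norm (y k * (\<Sum>n\<in>N. G n k)) \<le> (\<Sum>n\<in>N. norm (G n k))" .
  qed
  finally show ?thesis .
qed

lemma four_lemma:
  fixes g :: "'a \<Rightarrow> complex"
  assumes "finite A"
  shows "\<exists>B\<subseteq>A. (\<Sum>i\<in>A. norm (g i)) \<le> 4 * norm (\<Sum>i\<in>B. g i)"
proof -
  define A1 where "A1 = {i\<in>A. 0 \<le> Re (g i)}"
  define A2 where "A2 = {i\<in>A. \<not> 0 \<le> Re (g i)}"
  define A3 where "A3 = {i\<in>A. 0 \<le> Im (g i)}"
  define A4 where "A4 = {i\<in>A. \<not> 0 \<le> Im (g i)}"
  have fin: "finite A1" "finite A2" "finite A3" "finite A4"
    using assms by (auto simp: A1_def A2_def A3_def A4_def)
  have "(\<Sum>i\<in>A. \<bar>Re (g i)\<bar>) = (\<Sum>i\<in>A1. \<bar>Re (g i)\<bar>) + (\<Sum>i\<in>A2. \<bar>Re (g i)\<bar>)"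
    using assms by (subst sum.union_disjoint[symmetric]) (auto simp: A1_def A2_def intro: sum.cong)
  also have "\<dots> = Re (\<Sum>i\<in>A1. g i) - Re (\<Sum>i\<in>A2. g i)"
    by (simp add: Re_sum A1_def A2_def sum_negf[symmetric])
  also have "\<dots> \<le> norm (\<Sum>i\<in>A1. g i) + norm (\<Sum>i\<in>A2. g i)"
    using abs_Re_le_cmod[of "\<Sum>i\<in>A1. g i"] abs_Re_le_cmod[of "\<Sum>i\<in>A2. g i"] by linarith
  finally have re: "(\<Sum>i\<in>A. \<bar>Re (g i)\<bar>) \<le> norm (\<Sum>i\<in>A1. g i) + norm (\<Sum>i\<in>A2. g i)" .
  have "(\<Sum>i\<in>A. \<bar>Im (g i)\<bar>) = (\<Sum>i\<in>A3. \<bar>Im (g i)\<bar>) + (\<Sum>i\<in>A4. \<bar>Im (g i)\<bar>)"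
    using assms by (subst sum.union_disjoint[symmetric]) (auto simp: A3_def A4_def intro: sum.cong)
  also have "\<dots> = Im (\<Sum>i\<in>A3. g i) - Im (\<Sum>i\<in>A4. g i)"
    by (simp add: Im_sum A3_def A4_def sum_negf[symmetric])
  also have "\<dots> \<le> norm (\<Sum>i\<in>A3. g i) + norm (\<Sum>i\<in>A4. g i)"
    using abs_Im_le_cmod[of "\<Sum>i\<in>A3. g i"] abs_Im_le_cmod[of "\<Sum>i\<in>A4. g i"] by linarith
  finally have im: "(\<Sum>i\<in>A. \<bar>Im (g i)\<bar>) \<le> norm (\<Sum>i\<in>A3. g i) + norm (\<Sum>i\<in>A4. g i)" .
  have "(\<Sum>i\<in>A. norm (g i)) \<le> (\<Sum>i\<in>A. \<bar>Re (g i)\<bar> + \<bar>Im (g i)\<bar>)"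
    by (intro sum_mono cmod_le)
  also have "\<dots> \<le> norm (\<Sum>i\<in>A1. g i) + norm (\<Sum>i\<in>A2. g i) + norm (\<Sum>i\<in>A3. g i) + norm (\<Sum>i\<in>A4. g i)"
    using re im by (simp add: sum.distrib)
  finally have tot: "(\<Sum>i\<in>A. norm (g i)) \<le> norm (\<Sum>i\<in>A1. g i) + norm (\<Sum>i\<in>A2. g i) + norm (\<Sum>i\<in>A3. g i) + norm (\<Sum>i\<in>A4. g i)" .
  define S where "S = {A1, A2, A3, A4}"
  define M where "M = Max ((\<lambda>C. norm (sum g C)) ` S)"
  have "M \<in> (\<lambda>C. norm (sum g C)) ` S" unfolding M_def S_def by (intro Max_in) auto
  then obtain B where B: "B \<in> S" "M = norm (sum g B)" by auto
  have le: "norm (sum g C) \<le> M" if "C \<in> S" for C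
    unfolding M_def using that by (intro Max_ge) (auto simp: S_def)
  have "B \<subseteq> A" using B(1) by (auto simp: S_def A1_def A2_def A3_def A4_def)
  moreover have "(\<Sum>i\<in>A. norm (g i)) \<le> 4 * norm (\<Sum>i\<in>B. g i)"
    using tot le[of A1] le[of A2] le[of A3] le[of A4] B(2) by (simp add: S_def)
  ultimately show ?thesis by blast
qed

lemma tail_small:
  fixes f :: "nat \<Rightarrow> real"
  assumes "summable f" "\<And>n. 0 \<le> f n" "0 < e"
  shows "\<exists>a. \<forall>N. finite N \<longrightarrow> N \<subseteq> {a<..} \<longrightarrow> sum f N < e"
proof -
  obtain M where M: "\<And>m n. m \<ge> M \<Longrightarrow> norm (sum f {m..<n}) < e"
    using assms(1,3) unfolding summable_Cauchy by blast
  show ?thesis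
  proof (intro exI allI impI)
    fix N assume N: "finite N" "N \<subseteq> {M<..}"
    have "sum f N \<le> sum f {Suc M..<Suc (Max (insert 0 N))}"
      using N assms(2) by (intro sum_mono2) (auto simp: le_imp_less_Suc Max_ge)
    also have "\<dots> < e" using M[of "Suc M" "Suc (Max (insert 0 N))"] assms(2)
      by (simp add: sum_nonneg)
    finally show "sum f N < e" .
  qed
qed


lemma tail_choice:
  fixes G :: "nat \<Rightarrow> nat \<Rightarrow> complex"
  assumes col: "\<And>k. summable (\<lambda>n. norm (G n k))"
  shows "\<exists>a\<ge>b. \<forall>N. finite N \<longrightarrow> N \<subseteq> {a<..} \<longrightarrow> (\<Sum>k\<le>b. \<Sum>n\<in>N. norm (G n k)) \<le> 1"
proof -
  have "\<forall>k. \<exists>a. \<forall>N. finite N \<longrightarrow> N \<subseteq> {a<..} \<longrightarrow> (\<Sum>n\<in>N. norm (G n k)) < 1 / real (Suc b)"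
    using tail_small[OF col] by simp
  then obtain af where af: "\<And>k N. finite N \<Longrightarrow> N \<subseteq> {af k<..} \<Longrightarrow> (\<Sum>n\<in>N. norm (G n k)) < 1 / real (Suc b)"
    by metis
  define a where "a = Max (insert b (af ` {..b}))"
  have ab: "b \<le> a" unfolding a_def by simp
  have aka: "af k \<le> a" if "k \<le> b" for k unfolding a_def using that by (intro Max_ge) auto
  show ?thesis
  proof (intro exI[of _ a] conjI allI impI ab)
    fix N assume N: "finite N" "N \<subseteq> {a<..}"
    have "(\<Sum>k\<le>b. \<Sum>n\<in>N. norm (G n k)) \<le> (\<Sum>k\<le>b. 1 / real (Suc b))"
    proof (rule sum_mono)
      fix k assume "k \<in> {..b}"
      then have "N \<subseteq> {af k<..}" using N aka[of k] by auto
      then show "(\<Sum>n\<in>N. norm (G n k)) \<le> 1 / real (Suc b)" using af[of N k] N by simp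
    qed
    also have "\<dots> = 1" by simp
    finally show "(\<Sum>k\<le>b. \<Sum>n\<in>N. norm (G n k)) \<le> 1" .
  qed
qed



lemma sum_split_pred: "finite A \<Longrightarrow> sum f A = sum f {x\<in>A. P x} + sum f {x\<in>A. \<not> P x}"
  by (subst sum.union_disjoint[symmetric]) (auto intro: sum.cong)

lemma block_cover:
  assumes "strict_mono (bb::nat\<Rightarrow>nat)" "bb 0 = 0" "0 < k"
  shows "\<exists>i. bb i < k \<and> k \<le> bb (Suc i)"
proof -
  define i where "i = (LEAST i. k \<le> bb (Suc i))"
  have ex: "k \<le> bb (Suc k)" using seq_suble[OF assms(1), of "Suc k"] by simp
  have i1: "k \<le> bb (Suc i)" unfolding i_def by (rule LeastI[of _ k]) (rule ex)
  have i2: "bb i < k"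
  proof (cases i)
    case 0 then show ?thesis using assms by simp
  next
    case (Suc i')
    have "i' < i" using Suc by simp
    then have "\<not> k \<le> bb (Suc i')" unfolding i_def by (rule not_less_Least)
    then show ?thesis using Suc by simp
  qed
  show ?thesis using i1 i2 by blast
qed

lemma gliding_hump:
  fixes G :: "nat \<Rightarrow> nat \<Rightarrow> complex" and \<beta> :: "nat \<Rightarrow> real" and R :: "(nat \<Rightarrow> complex) \<Rightarrow> bool"
  assumes LT: "LT G"
    and col: "\<And>k. summable (\<lambda>n. norm (G n k))"
    and bpos: "\<And>j. 0 < \<beta> j" and ble: "\<And>j. \<beta> j \<le> 1"
    and Rres: "\<And>w b. R w \<Longrightarrow> R (\<lambda>k. if b < k then w k else 0)"
    and large: "\<And>L. \<exists>N w e. finite N \<and> (\<forall>k>e. w k = 0) \<and> (\<forall>k. norm (w k) \<le> 1) \<and> R w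
                   \<and> L \<le> norm (\<Sum>n\<in>N. Gapp G w n)"
  shows "\<exists>y bb Z. strict_mono bb \<and> bb 0 = 0 \<and> (\<forall>j. R (Z j)) \<and> (\<forall>j k. norm (Z j k) \<le> 1)
     \<and> (\<forall>j k. Z j k \<noteq> 0 \<longrightarrow> bb j < k \<and> k \<le> bb (Suc j))
     \<and> y 0 = 0 \<and> (\<forall>j k. bb j < k \<and> k \<le> bb (Suc j) \<longrightarrow> y k = of_real (\<beta> j) * Z j k)
     \<and> \<not> summable (\<lambda>n. norm (Gapp G y n))"
proof -
  define C1 where "C1 a = (\<Sum>n\<le>a. \<Sum>k\<le>n. norm (G n k))" for a
  define A where "A b = (SOME a. b \<le> a \<and> (\<forall>N. finite N \<longrightarrow> N \<subseteq> {a<..} \<longrightarrow> (\<Sum>k\<le>b. \<Sum>n\<in>N. norm (G n k)) \<le> 1))" for b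
  have A0: "A b \<ge> b \<and> (\<forall>N. finite N \<longrightarrow> N \<subseteq> {A b<..} \<longrightarrow> (\<Sum>k\<le>b. \<Sum>n\<in>N. norm (G n k)) \<le> 1)" for b
    unfolding A_def by (rule someI_ex) (use tail_choice[OF col, of b] in simp)
  have A: "\<And>b. b \<le> A b" "\<And>b N. finite N \<Longrightarrow> N \<subseteq> {A b<..} \<Longrightarrow> (\<Sum>k\<le>b. \<Sum>n\<in>N. norm (G n k)) \<le> 1"
    using A0 by auto
  define P where "P j b = (\<lambda>(N, w, e). finite N \<and> (\<forall>k>e. w k = 0) \<and> (\<forall>k. norm (w k) \<le> 1) \<and> R w
     \<and> 2 / \<beta> j + C1 (A b) + 1 \<le> norm (\<Sum>n\<in>N. Gapp G w n))" for j b
  have exP: "\<exists>x. P j b x" for j b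
  proof -
    obtain N w e where "finite N" "\<forall>k>e. w k = 0" "\<forall>k. norm (w k) \<le> 1" "R w"
      "2 / \<beta> j + C1 (A b) + 1 \<le> norm (\<Sum>n\<in>N. Gapp G w n)"
      using large[of "2 / \<beta> j + C1 (A b) + 1"] by blast
    then show ?thesis unfolding P_def by (intro exI[of _ "(N, w, e)"]) simp
  qed
  define X where "X j b = (SOME x. P j b x)" for j b
  have X: "P j b (X j b)" for j b unfolding X_def by (rule someI_ex) (rule exP)
  define NN where "NN j b = fst (X j b)" for j b
  define WW where "WW j b = fst (snd (X j b))" for j b
  define EE where "EE j b = snd (snd (X j b))" for j b
  have NW: "\<And>j b. finite (NN j b)" "\<And>j b k. k > EE j b \<Longrightarrow> WW j b k = 0"
    "\<And>j b k. norm (WW j b k) \<le> 1" "\<And>j b. R (WW j b)"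
    "\<And>j b. 2 / \<beta> j + C1 (A b) + 1 \<le> norm (\<Sum>n\<in>NN j b. Gapp G (WW j b) n)"
    using X unfolding P_def NN_def WW_def EE_def by (auto simp: case_prod_beta)
  define bb where "bb = rec_nat 0 (\<lambda>j b. Suc (max (max (EE j b) (Max (insert 0 (NN j b)))) (A b)))"
  have bb0: "bb 0 = 0" by (simp add: bb_def)
  have bbS: "bb (Suc j) = Suc (max (max (EE j (bb j)) (Max (insert 0 (NN j (bb j))))) (A (bb j)))" for j
    by (simp add: bb_def)
  have EEb: "EE j (bb j) < bb (Suc j)" for j by (simp add: bbS)
  have NNb: "n < bb (Suc j)" if "n \<in> NN j (bb j)" for j n
  proof -
    have "n \<le> Max (insert 0 (NN j (bb j)))" using that NW(1) by (intro Max_ge) auto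
    then show ?thesis by (simp add: bbS)
  qed
  have Ab: "A (bb j) < bb (Suc j)" for j by (simp add: bbS)
  have smono: "strict_mono bb" unfolding strict_mono_Suc_iff using A(1) Ab le_less_trans by blast
  define Z where "Z j = (\<lambda>k. if bb j < k then WW j (bb j) k else 0)" for j
  define J where "J k = (LEAST i. k \<le> bb (Suc i))" for k
  define y where "y k = (if k = 0 then 0 else of_real (\<beta> (J k)) * Z (J k) k)" for k
  have Jeq: "J k = j" if "bb j < k" "k \<le> bb (Suc j)" for j k
    unfolding J_def
  proof (rule Least_equality)
    show "k \<le> bb (Suc j)" by fact
    fix i assume i: "k \<le> bb (Suc i)"
    show "j \<le> i"
    proof (rule ccontr)
      assume "\<not> j \<le> i"
      then have "Suc i \<le> j" by simp
      then have "bb (Suc i) \<le> bb j" using strict_mono_less_eq[OF smono] by blast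
      then show False using i that by simp
    qed
  qed
  have yblk: "y k = of_real (\<beta> j) * Z j k" if "bb j < k" "k \<le> bb (Suc j)" for j k
    using that Jeq[OF that] by (auto simp: y_def)
  have Zsupp: "bb j < k \<and> k \<le> bb (Suc j)" if "Z j k \<noteq> 0" for j k
  proof -
    have "bb j < k" "WW j (bb j) k \<noteq> 0" using that by (auto simp: Z_def split: if_splits)
    then have "k \<le> EE j (bb j)" using NW(2) not_le by blast
    then show ?thesis using EEb[of j] \<open>bb j < k\<close> by simp
  qed
  have Znorm: "norm (Z j k) \<le> 1" for j k using NW(3) by (simp add: Z_def)
  have RZ: "R (Z j)" for j unfolding Z_def by (rule Rres) (rule NW(4))
  have ynorm: "norm (y k) \<le> 1" for k
  proof (cases "k = 0")
    case True then show ?thesis by (simp add: y_def)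
  next
    case False
    then obtain i where i: "bb i < k" "k \<le> bb (Suc i)" using block_cover[OF smono bb0] by blast
    have "norm (y k) = \<beta> i * norm (Z i k)" using yblk[OF i] bpos[of i] by (simp add: norm_mult)
    also have "\<dots> \<le> 1" using Znorm[of i k] ble[of i] bpos[of i] by (simp add: mult_le_one)
    finally show ?thesis .
  qed
  define Nj where "Nj j = {n \<in> NN j (bb j). A (bb j) < n}" for j
  have Nj_fin: "finite (Nj j)" for j using NW(1) by (simp add: Nj_def)
  have Nj_sub: "Nj j \<subseteq> {bb j<..<bb (Suc j)}" for j
    using A(1)[of "bb j"] NNb by (auto simp: Nj_def)
  have key: "1 \<le> (\<Sum>n\<in>Nj j. norm (Gapp G y n))" for j
  proof -
    define w where "w = WW j (bb j)"
    define N0 where "N0 = NN j (bb j)"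
    define a where "a = A (bb j)"
    define b where "b = bb j"
    define wl where "wl k = (if k \<le> b then w k else 0)" for k
    have w0: "\<forall>k. norm (w k) \<le> 1" using NW(3) by (simp add: w_def)
    have split1: "(\<Sum>n\<in>N0. Gapp G w n) = (\<Sum>n\<in>{n\<in>N0. n \<le> a}. Gapp G w n) + (\<Sum>n\<in>Nj j. Gapp G w n)"
      using sum_split_pred[of N0 _ "\<lambda>n. n \<le> a"] NW(1) by (simp add: Nj_def N0_def a_def not_le)
    have "norm (\<Sum>n\<in>{n\<in>N0. n \<le> a}. Gapp G w n) \<le> (\<Sum>n\<in>{n\<in>N0. n \<le> a}. norm (Gapp G w n))"
      by (rule norm_sum)
    also have "\<dots> \<le> (\<Sum>n\<in>{n\<in>N0. n \<le> a}. \<Sum>k\<le>n. norm (G n k))"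
      by (intro sum_mono Gapp_norm_le w0)
    also have "\<dots> \<le> C1 a" unfolding C1_def
      by (intro sum_mono2) (auto intro: sum_nonneg)
    finally have b1: "norm (\<Sum>n\<in>{n\<in>N0. n \<le> a}. Gapp G w n) \<le> C1 a" .
    have wsplit: "w = (\<lambda>k. wl k + Z j k)" by (auto simp: fun_eq_iff wl_def Z_def w_def b_def)
    have "norm (\<Sum>n\<in>Nj j. Gapp G wl n) \<le> (\<Sum>k\<le>b. \<Sum>n\<in>Nj j. norm (G n k))"
      using LT w0 by (intro Gapp_low_bound) (auto simp: wl_def)
    also have "\<dots> \<le> 1" using A(2)[of "Nj j" b] Nj_fin by (auto simp: Nj_def b_def)
    finally have b2: "norm (\<Sum>n\<in>Nj j. Gapp G wl n) \<le> 1" .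
    have "2 / \<beta> j + C1 a + 1 \<le> norm (\<Sum>n\<in>N0. Gapp G w n)"
      using NW(5)[of j "bb j"] by (simp add: a_def N0_def w_def)
    also have "\<dots> \<le> C1 a + norm (\<Sum>n\<in>Nj j. Gapp G w n)"
      unfolding split1 using b1 norm_triangle_ineq[of "\<Sum>n\<in>{n\<in>N0. n \<le> a}. Gapp G w n" "\<Sum>n\<in>Nj j. Gapp G w n"]
      by linarith
    also have "(\<Sum>n\<in>Nj j. Gapp G w n) = (\<Sum>n\<in>Nj j. Gapp G wl n) + (\<Sum>n\<in>Nj j. Gapp G (Z j) n)"
      by (subst wsplit) (simp add: Gapp_add sum.distrib)
    finally have b3: "2 / \<beta> j \<le> norm (\<Sum>n\<in>Nj j. Gapp G (Z j) n)"
      using b2 norm_triangle_ineq[of "\<Sum>n\<in>Nj j. Gapp G wl n" "\<Sum>n\<in>Nj j. Gapp G (Z j) n"]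
      by linarith
    define yl where "yl k = (if k \<le> b then y k else 0)" for k
    have ysplit: "Gapp G y n = Gapp G yl n + of_real (\<beta> j) * Gapp G (Z j) n" if n: "n \<in> Nj j" for n
    proof -
      have nlt: "n < bb (Suc j)" using Nj_sub[of j] n by auto
      have "Gapp G y n = Gapp G (\<lambda>k. yl k + of_real (\<beta> j) * Z j k) n"
      proof (rule Gapp_cong)
        fix k assume "k \<le> n"
        then show "y k = yl k + of_real (\<beta> j) * Z j k"
          using yblk[of j k] nlt by (auto simp: yl_def Z_def b_def)
      qed
      then show ?thesis by (simp add: Gapp_add Gapp_cmult)
    qed
    have "norm (\<Sum>n\<in>Nj j. Gapp G yl n) \<le> (\<Sum>k\<le>b. \<Sum>n\<in>Nj j. norm (G n k))"
      using LT ynorm by (intro Gapp_low_bound) (auto simp: yl_def)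
    also have "\<dots> \<le> 1" using A(2)[of "Nj j" b] Nj_fin by (auto simp: Nj_def b_def)
    finally have b4: "norm (\<Sum>n\<in>Nj j. Gapp G yl n) \<le> 1" .
    have sy: "(\<Sum>n\<in>Nj j. Gapp G y n) = (\<Sum>n\<in>Nj j. Gapp G yl n) + of_real (\<beta> j) * (\<Sum>n\<in>Nj j. Gapp G (Z j) n)"
      by (simp add: ysplit sum.distrib sum_distrib_left)
    have "norm (of_real (\<beta> j) * (\<Sum>n\<in>Nj j. Gapp G (Z j) n)) = \<beta> j * norm (\<Sum>n\<in>Nj j. Gapp G (Z j) n)"
      using bpos[of j] by (simp add: norm_mult)
    also have "\<dots> \<ge> \<beta> j * (2 / \<beta> j)" using b3 bpos[of j] by (intro mult_left_mono) auto
    finally have "2 \<le> norm (of_real (\<beta> j) * (\<Sum>n\<in>Nj j. Gapp G (Z j) n))"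
      using bpos[of j] by simp
    moreover have "norm (of_real (\<beta> j) * (\<Sum>n\<in>Nj j. Gapp G (Z j) n)) - norm (\<Sum>n\<in>Nj j. Gapp G yl n)
        \<le> norm (of_real (\<beta> j) * (\<Sum>n\<in>Nj j. Gapp G (Z j) n) + (\<Sum>n\<in>Nj j. Gapp G yl n))"
      by (rule norm_diff_ineq)
    ultimately have "1 \<le> norm (\<Sum>n\<in>Nj j. Gapp G y n)"
      using sy b4 by (simp add: add.commute)
    also have "\<dots> \<le> (\<Sum>n\<in>Nj j. norm (Gapp G y n))" by (rule norm_sum)
    finally show ?thesis .
  qed
  have disj: "Nj i \<inter> Nj j = {}" if "i \<noteq> j" for i j
  proof -
    have "Nj i \<inter> Nj j = {}" if "i < j" for i j
    proof -
      have "bb (Suc i) \<le> bb j" using that strict_mono_less_eq[OF smono] by simp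
      have "x < bb (Suc i)" if "x \<in> Nj i" for x using Nj_sub[of i] that by auto
      moreover have "bb j < x" if "x \<in> Nj j" for x using Nj_sub[of j] that by auto
      ultimately show ?thesis using \<open>bb (Suc i) \<le> bb j\<close> by (meson disjoint_iff le_less_trans less_asym)
    qed
    then show ?thesis using \<open>i \<noteq> j\<close> by (metis inf_commute linorder_neqE_nat)
  qed
  have notsum: "\<not> summable (\<lambda>n. norm (Gapp G y n))"
  proof
    assume sm: "summable (\<lambda>n. norm (Gapp G y n))"
    define S where "S = (\<Sum>n. norm (Gapp G y n))"
    have "real m \<le> S" for m
    proof -
      have "real m = (\<Sum>j<m. 1)" by simp
      also have "\<dots> \<le> (\<Sum>j<m. \<Sum>n\<in>Nj j. norm (Gapp G y n))" by (intro sum_mono key)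
      also have "\<dots> = (\<Sum>n\<in>(\<Union>j<m. Nj j). norm (Gapp G y n))"
        by (rule sum.UNION_disjoint[symmetric]) (auto simp: Nj_fin disj)
      also have "\<dots> \<le> S" unfolding S_def
        by (intro sum_le_suminf sm) (auto simp: Nj_fin)
      finally show ?thesis .
    qed
    from this[of "nat \<lceil>S\<rceil> + 1"] show False by linarith
  qed
  show ?thesis
  proof (intro exI[of _ y] exI[of _ bb] exI[of _ Z] conjI allI impI)
    show "y 0 = 0" by (simp add: y_def)
  qed (use smono bb0 RZ Znorm Zsupp yblk notsum in blast)+
qed



lemma holder_finite:
  fixes a b :: "'a \<Rightarrow> real"
  assumes fin: "finite I" and a0: "\<And>i. 0 \<le> a i" and b0: "\<And>i. 0 \<le> b i"
    and p: "1 < p" and q: "1 < q" and pq: "1/p + 1/q = 1"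
  shows "(\<Sum>i\<in>I. a i * b i) \<le> (\<Sum>i\<in>I. a i powr p) powr (1/p) * (\<Sum>i\<in>I. b i powr q) powr (1/q)"
proof -
  define SA where "SA = (\<Sum>i\<in>I. a i powr p)"
  define SB where "SB = (\<Sum>i\<in>I. b i powr q)"
  have SA0: "0 \<le> SA" and SB0: "0 \<le> SB" unfolding SA_def SB_def by (auto intro: sum_nonneg)
  show ?thesis
  proof (cases "SA = 0 \<or> SB = 0")
    case True
    then have "(\<forall>i\<in>I. a i = 0) \<or> (\<forall>i\<in>I. b i = 0)"
      unfolding SA_def SB_def using fin by (subst (asm) (1 2) sum_nonneg_eq_0_iff) auto
    then have "(\<Sum>i\<in>I. a i * b i) = 0" by auto
    then show ?thesis using SA0 SB0 unfolding SA_def SB_def by simp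
  next
    case False
    then have SAp: "0 < SA" and SBp: "0 < SB" using SA0 SB0 by auto
    define \<alpha> where "\<alpha> = SA powr (1/p)"
    define \<beta> where "\<beta> = SB powr (1/q)"
    have ap: "0 < \<alpha>" and bp: "0 < \<beta>" using SAp SBp by (auto simp: \<alpha>_def \<beta>_def)
    have ap2: "\<alpha> powr p = SA" using SAp p by (simp add: \<alpha>_def powr_powr)
    have bp2: "\<beta> powr q = SB" using SBp q by (simp add: \<beta>_def powr_powr)
    have "(\<Sum>i\<in>I. (a i / \<alpha>) * (b i / \<beta>)) \<le> (\<Sum>i\<in>I. (a i / \<alpha>) powr p / p + (b i / \<beta>) powr q / q)"
      by (intro sum_mono Youngs_inequality p q pq) (use a0 b0 ap bp in auto)
    also have "\<dots> = (\<Sum>i\<in>I. a i powr p) / (SA * p) + (\<Sum>i\<in>I. b i powr q) / (SB * q)"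
      by (simp add: powr_divide ap2 bp2 sum.distrib sum_divide_distrib)
    also have "\<dots> = 1" using SAp SBp p q pq by (simp add: SA_def[symmetric] SB_def[symmetric])
    finally have "(\<Sum>i\<in>I. (a i / \<alpha>) * (b i / \<beta>)) \<le> 1" .
    moreover have "(\<Sum>i\<in>I. a i * b i) = \<alpha> * \<beta> * (\<Sum>i\<in>I. (a i / \<alpha>) * (b i / \<beta>))"
      using ap bp by (simp add: sum_distrib_left)
    ultimately have "(\<Sum>i\<in>I. a i * b i) \<le> \<alpha> * \<beta>"
      using ap bp by (metis mult_left_le mult_nonneg_nonneg less_imp_le)
    then show ?thesis by (simp add: \<alpha>_def \<beta>_def SA_def SB_def)
  qed
qed

lemma suminf_gt_partial:
  fixes f :: "nat \<Rightarrow> real"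
  assumes "summable f" "X < suminf f"
  shows "\<exists>m. X < sum f {..<m}"
proof -
  have "eventually (\<lambda>n. X < sum f {..<n}) sequentially"
    using order_tendstoD(1)[OF summable_LIMSEQ[OF assms(1)] assms(2)] .
  then show ?thesis by (auto simp: eventually_sequentially)
qed

definition F1 :: "(nat \<Rightarrow> nat \<Rightarrow> complex) \<Rightarrow> bool" where
  "F1 G \<longleftrightarrow> (\<exists>M. \<forall>K. finite K \<longrightarrow> summable (\<lambda>n. norm (\<Sum>k\<in>K. G n k)) \<and> (\<Sum>n. norm (\<Sum>k\<in>K. G n k)) \<le> M)"

definition F6 :: "real \<Rightarrow> (nat \<Rightarrow> nat \<Rightarrow> complex) \<Rightarrow> bool" where
  "F6 q G \<longleftrightarrow> (\<exists>M. \<forall>N. finite N \<longrightarrow> summable (\<lambda>k. norm (\<Sum>n\<in>N. G n k) powr q) \<and> (\<Sum>k. norm (\<Sum>n\<in>N. G n k) powr q) \<le> M)"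

lemma block_sum_trunc:
  assumes LT: "LT G" and B: "B \<subseteq> {..<m}"
  shows "(\<Sum>n\<in>B. Gapp G y n) = (\<Sum>k\<le>m. (if k < m then y k else 0) * (\<Sum>n\<in>B. G n k))"
proof -
  define y' where "y' k = (if k < m then y k else 0)" for k
  have "(\<Sum>n\<in>B. Gapp G y n) = (\<Sum>n\<in>B. Gapp G y' n)"
    using B by (intro sum.cong refl Gapp_cong) (auto simp: y'_def)
  also have "\<dots> = (\<Sum>k\<le>m. y' k * (\<Sum>n\<in>B. G n k))"
    by (rule Gapp_sum_swap[OF LT]) (auto simp: y'_def)
  finally show ?thesis by (simp add: y'_def)
qed

theorem T2:
  assumes LT: "LT G" and F: "F1 G" and y: "Bseq y"
  shows "summable (\<lambda>n. norm (Gapp G y n))"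
proof -
  obtain B where B: "B > 0" "\<And>k. norm (y k) \<le> B" using y by (auto elim: BseqE)
  obtain M where M: "\<And>K. finite K \<Longrightarrow> summable (\<lambda>n. norm (\<Sum>k\<in>K. G n k))"
      "\<And>K. finite K \<Longrightarrow> (\<Sum>n. norm (\<Sum>k\<in>K. G n k)) \<le> M"
    using F unfolding F1_def by blast
  show ?thesis
  proof (rule summableI_nonneg_bounded)
    fix m
    obtain B' where B': "B' \<subseteq> {..<m}" "(\<Sum>n<m. norm (Gapp G y n)) \<le> 4 * norm (\<Sum>n\<in>B'. Gapp G y n)"
      using four_lemma[of "{..<m}" "Gapp G y"] by auto
    define c where "c k = (\<Sum>n\<in>B'. G n k)" for k
    have "norm (\<Sum>n\<in>B'. Gapp G y n) = norm (\<Sum>k\<le>m. (if k < m then y k else 0) * c k)"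
      using block_sum_trunc[OF LT B'(1)] by (simp add: c_def)
    also have "\<dots> \<le> (\<Sum>k\<le>m. norm ((if k < m then y k else 0) * c k))" by (rule norm_sum)
    also have "\<dots> \<le> (\<Sum>k\<le>m. B * norm (c k))"
      by (intro sum_mono) (use B in \<open>auto simp: norm_mult intro: mult_right_mono\<close>)
    also have "\<dots> = B * (\<Sum>k\<le>m. norm (c k))" by (simp add: sum_distrib_left)
    also have "\<dots> \<le> B * (4 * M)"
    proof -
      obtain K where K: "K \<subseteq> {..m}" "(\<Sum>k\<le>m. norm (c k)) \<le> 4 * norm (\<Sum>k\<in>K. c k)"
        using four_lemma[of "{..m}" c] by auto
      have fK: "finite K" using K(1) finite_subset by blast
      have "norm (\<Sum>k\<in>K. c k) = norm (\<Sum>n\<in>B'. \<Sum>k\<in>K. G n k)"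
        unfolding c_def by (subst sum.swap) simp
      also have "\<dots> \<le> (\<Sum>n\<in>B'. norm (\<Sum>k\<in>K. G n k))" by (rule norm_sum)
      also have "\<dots> \<le> (\<Sum>n. norm (\<Sum>k\<in>K. G n k))"
        using B'(1) by (intro sum_le_suminf M(1) fK) (auto intro: finite_subset)
      also have "\<dots> \<le> M" by (rule M(2)[OF fK])
      finally show ?thesis using K(2) B(1) by (intro mult_left_mono) auto
    qed
    finally show "(\<Sum>n<m. norm (Gapp G y n)) \<le> 16 * B * M" using B' by simp
  qed simp
qed

theorem T4:
  assumes LT: "LT G" and p: "1 < p" and pq: "1/p + 1/q = 1" and F: "F6 q G"
    and y: "summable (\<lambda>k. norm (y k) powr p)"
  shows "summable (\<lambda>n. norm (Gapp G y n))"
proof -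
  have q: "1 < q"
  proof -
    have "1/q = 1 - 1/p" using pq by simp
    moreover have "0 < 1 - 1/p" "1 - 1/p < 1" using p by auto
    ultimately have "0 < 1/q" "1/q < 1" by auto
    then show ?thesis by (simp add: divide_less_eq split: if_splits)
  qed
  obtain M where M: "\<And>N. finite N \<Longrightarrow> summable (\<lambda>k. norm (\<Sum>n\<in>N. G n k) powr q)"
      "\<And>N. finite N \<Longrightarrow> (\<Sum>k. norm (\<Sum>n\<in>N. G n k) powr q) \<le> M"
    using F unfolding F6_def by blast
  have M0: "0 \<le> M" using M(2)[of "{}"] by simp
  define Y where "Y = (\<Sum>k. norm (y k) powr p)"
  show ?thesis
  proof (rule summableI_nonneg_bounded)
    fix m
    obtain B' where B': "B' \<subseteq> {..<m}" "(\<Sum>n<m. norm (Gapp G y n)) \<le> 4 * norm (\<Sum>n\<in>B'. Gapp G y n)"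
      using four_lemma[of "{..<m}" "Gapp G y"] by auto
    have fB: "finite B'" using B'(1) finite_subset by blast
    define c where "c k = (\<Sum>n\<in>B'. G n k)" for k
    define y' where "y' k = (if k < m then y k else 0)" for k
    have "norm (\<Sum>n\<in>B'. Gapp G y n) = norm (\<Sum>k\<le>m. y' k * c k)"
      using block_sum_trunc[OF LT B'(1)] by (simp add: c_def y'_def)
    also have "\<dots> \<le> (\<Sum>k\<le>m. norm (y' k) * norm (c k))" by (rule order_trans[OF norm_sum]) (simp add: norm_mult)
    also have "\<dots> \<le> (\<Sum>k\<le>m. norm (y' k) powr p) powr (1/p) * (\<Sum>k\<le>m. norm (c k) powr q) powr (1/q)"
      by (rule holder_finite) (use p q pq in auto)
    also have "\<dots> \<le> Y powr (1/p) * M powr (1/q)"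
    proof (intro mult_mono powr_mono2)
      have "(\<Sum>k\<le>m. norm (y' k) powr p) \<le> (\<Sum>k\<le>m. norm (y k) powr p)"
        by (intro sum_mono) (auto simp: y'_def)
      also have "\<dots> \<le> Y" unfolding Y_def by (intro sum_le_suminf y) auto
      finally show "(\<Sum>k\<le>m. norm (y' k) powr p) \<le> Y" .
      have "(\<Sum>k\<le>m. norm (c k) powr q) \<le> (\<Sum>k. norm (c k) powr q)"
        unfolding c_def by (intro sum_le_suminf M(1) fB) auto
      also have "\<dots> \<le> M" unfolding c_def by (rule M(2)[OF fB])
      finally show "(\<Sum>k\<le>m. norm (c k) powr q) \<le> M" .
    qed (use p q in \<open>auto intro: sum_nonneg\<close>)
    finally show "(\<Sum>n<m. norm (Gapp G y n)) \<le> 4 * (Y powr (1/p) * M powr (1/q))" using B' by simp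
  qed simp
qed



lemma ind_Gapp:
  assumes LT: "LT G" and K: "finite K"
  shows "Gapp G (\<lambda>k. if k \<in> K then 1 else 0) n = (\<Sum>k\<in>K. G n k)"
proof -
  define e where "e = Max (insert 0 K)"
  have Kle: "k \<le> e" if "k \<in> K" for k unfolding e_def using K that by (intro Max_ge) auto
  have "Gapp G (\<lambda>k. if k \<in> K then 1 else 0) n = (\<Sum>k\<le>e. G n k * (if k \<in> K then 1 else 0))"
    by (rule Gapp_bound_le[OF LT]) (use Kle in \<open>force simp: not_le\<close>)
  also have "(\<lambda>k. G n k * (if k \<in> K then 1 else 0)) = (\<lambda>k. if k \<in> K then G n k else 0)" by auto
  also have "(\<Sum>k\<le>e. if k \<in> K then G n k else 0) = (\<Sum>k\<in>{..e} \<inter> K. G n k)"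
    by (simp add: sum.inter_restrict)
  also have "{..e} \<inter> K = K" using Kle by auto
  finally show ?thesis .
qed

lemma ind_lim0:
  assumes "finite K"
  shows "(\<lambda>k. if k \<in> K then 1 else (0::complex)) \<longlonglongrightarrow> 0"
proof (rule tendsto_eventually)
  have "k \<notin> K" if "k > Max (insert 0 K)" for k
    using assms that Max_ge[of "insert 0 K" k] by auto
  then show "\<forall>\<^sub>F k in sequentially. (if k \<in> K then 1 else (0::complex)) = 0"
    unfolding eventually_sequentially by (intro exI[of _ "Suc (Max (insert 0 K))"]) auto
qed

lemma ind_zero_above:
  assumes "finite K"
  shows "\<forall>k>Max (insert 0 K). (if k \<in> K then 1 else (0::complex)) = 0"
  using assms Max_ge[of "insert 0 K"] by (auto simp: not_le)

theorem T1:
  assumes LT: "LT G" and H: "\<And>y. y \<longlonglongrightarrow> 0 \<Longrightarrow> summable (\<lambda>n. norm (Gapp G y n))"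
  shows "F1 G"
proof (rule ccontr)
  assume nF: "\<not> F1 G"
  have sK: "summable (\<lambda>n. norm (\<Sum>k\<in>K. G n k))" if K: "finite K" for K
    using H[OF ind_lim0[OF K]] ind_Gapp[OF LT K] by simp
  have col: "summable (\<lambda>n. norm (G n k))" for k using sK[of "{k}"] by simp
  have unb: "\<exists>K. finite K \<and> M < (\<Sum>n. norm (\<Sum>k\<in>K. G n k))" for M
    using nF sK unfolding F1_def by (meson not_le)
  have large: "\<exists>N w e. finite N \<and> (\<forall>k>e. w k = 0) \<and> (\<forall>k. norm (w k) \<le> 1) \<and> True
       \<and> L \<le> norm (\<Sum>n\<in>N. Gapp G w n)" for L
  proof -
    obtain K where K: "finite K" "4 * L < (\<Sum>n. norm (\<Sum>k\<in>K. G n k))" using unb by blast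
    obtain m where m: "4 * L < (\<Sum>n<m. norm (\<Sum>k\<in>K. G n k))"
      using suminf_gt_partial[OF sK[OF K(1)] K(2)] by blast
    obtain B where B: "B \<subseteq> {..<m}" "(\<Sum>n<m. norm (\<Sum>k\<in>K. G n k)) \<le> 4 * norm (\<Sum>n\<in>B. \<Sum>k\<in>K. G n k)"
      using four_lemma[of "{..<m}" "\<lambda>n. \<Sum>k\<in>K. G n k"] by auto
    have "L \<le> norm (\<Sum>n\<in>B. Gapp G (\<lambda>k. if k \<in> K then 1 else 0) n)"
      using B(2) m by (simp add: ind_Gapp[OF LT K(1)])
    moreover have "finite B" using B(1) finite_subset by blast
    ultimately show ?thesis
      using ind_zero_above[OF K(1)]
      by (intro exI[of _ B] exI[of _ "\<lambda>k. if k \<in> K then 1 else 0"] exI[of _ "Max (insert 0 K)"]) auto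
  qed
  define \<beta> where "\<beta> j = 1 / real (Suc j)" for j
  obtain y bb Z where GH: "strict_mono bb" "bb 0 = 0" "\<forall>j k. norm (Z j k) \<le> 1"
     "y 0 = 0" "\<forall>j k. bb j < k \<and> k \<le> bb (Suc j) \<longrightarrow> y k = of_real (\<beta> j) * Z j k"
     "\<not> summable (\<lambda>n. norm (Gapp G y n))"
    using gliding_hump[OF LT col, of \<beta> "\<lambda>_. True"] large unfolding \<beta>_def by auto
  have "y \<longlonglongrightarrow> 0"
  proof (rule LIMSEQ_I)
    fix r :: real assume r: "0 < r"
    obtain j where j: "inverse (real (Suc j)) < r" using reals_Archimedean[OF r] by blast
    show "\<exists>no. \<forall>k\<ge>no. norm (y k - 0) < r"
    proof (intro exI[of _ "Suc (bb j)"] allI impI)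
      fix k assume k: "Suc (bb j) \<le> k"
      obtain i where i: "bb i < k" "k \<le> bb (Suc i)" using block_cover[OF GH(1,2), of k] k by auto
      have ji: "j \<le> i"
      proof (rule ccontr)
        assume "\<not> j \<le> i"
        then have "bb (Suc i) \<le> bb j" using strict_mono_less_eq[OF GH(1)] by simp
        then show False using i k by simp
      qed
      have "y k = of_real (\<beta> i) * Z i k" using GH(5) i by blast
      then have "norm (y k - 0) = \<bar>\<beta> i\<bar> * norm (Z i k)" by (simp only: norm_mult norm_of_real diff_zero)
      also have "\<dots> = \<beta> i * norm (Z i k)" by (simp add: \<beta>_def)
      also have "\<dots> \<le> \<beta> i * 1" using GH(3) by (intro mult_left_mono) (auto simp: \<beta>_def)
      also have "\<dots> \<le> inverse (real (Suc j))" using ji by (simp add: \<beta>_def field_simps)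
      finally show "norm (y k - 0) < r" using j by simp
    qed
  qed
  then show False using H GH(6) by blast
qed



lemma conj_exp:
  assumes p: "1 < (p::real)" and pq: "1/p + 1/q = 1"
  shows "1 < q" "(q - 1) * p = q" "1 - 1/p = 1/q"
proof -
  have "1/q = 1 - 1/p" using pq by simp
  moreover have "0 < 1 - 1/p" "1 - 1/p < 1" using p by auto
  ultimately have "0 < 1/q" "1/q < 1" by auto
  then show q: "1 < q" by (simp add: divide_less_eq split: if_splits)
  show "(q - 1) * p = q" using pq p q by (simp add: field_simps)
  show "1 - 1/p = 1/q" using pq by simp
qed

lemma dual_vec:
  fixes c :: complex and q :: real
  assumes q: "1 < q"
  defines "u \<equiv> cnj c * of_real (norm c powr (q - 2))"
  shows "c * u = of_real (norm c powr q)" "norm u = norm c powr (q - 1)"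
proof -
  show "c * u = of_real (norm c powr q)"
  proof (cases "c = 0")
    case False
    then have n: "0 < norm c" by simp
    have "c * u = (c * cnj c) * of_real (norm c powr (q - 2))"
      unfolding u_def by (simp add: mult.assoc)
    also have "c * cnj c = of_real ((norm c)^2)" by (rule complex_norm_square[symmetric])
    also have "(norm c)^2 = norm c powr 2" using powr_realpow[OF n, of 2] by simp
    also have "of_real (norm c powr 2) * of_real (norm c powr (q - 2)) = (of_real (norm c powr q) :: complex)"
    proof -
      have "norm c powr 2 * norm c powr (q - 2) = norm c powr q" by (simp only: powr_add[symmetric]) simp
      then show ?thesis by (simp only: of_real_mult[symmetric])
    qed
    finally show ?thesis .
  qed (use q in simp)
  show "norm u = norm c powr (q - 1)"
  proof (cases "c = 0")
    case False
    then have n: "0 < norm c" by simp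
    have "norm u = norm c powr 1 * norm c powr (q - 2)" unfolding u_def using n
      by (simp add: norm_mult)
    also have "\<dots> = norm c powr (q - 1)" by (simp only: powr_add[symmetric]) simp
    finally show ?thesis .
  qed (use q in \<open>simp add: u_def\<close>)
qed

theorem T3:
  assumes LT: "LT G" and p: "1 < p" and pq: "1/p + 1/q = 1"
    and H: "\<And>y. summable (\<lambda>k. norm (y k) powr p) \<Longrightarrow> summable (\<lambda>n. norm (Gapp G y n))"
  shows "F6 q G"
proof (rule ccontr)
  assume nF: "\<not> F6 q G"
  have q: "1 < q" and qp: "(q - 1) * p = q" and pq': "1 - 1/p = 1/q" using conj_exp[OF p pq] by auto
  define cN where "cN N k = (\<Sum>n\<in>N. G n k)" for N k
  have cN0: "cN N k = 0" if "finite N" "Max (insert 0 N) < k" for N k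
  proof -
    have "G n k = 0" if "n \<in> N" for n
      using LT \<open>finite N\<close> \<open>Max (insert 0 N) < k\<close> Max_ge[of "insert 0 N" n] that
      unfolding LT_def by auto
    then show ?thesis by (simp add: cN_def)
  qed
  have sN: "summable (\<lambda>k. norm (cN N k) powr q)" if "finite N" for N
    by (rule summable_finite[of "{..Max (insert 0 N)}"]) (use cN0[OF that] in auto)
  have unb: "\<exists>N. finite N \<and> M < (\<Sum>k. norm (cN N k) powr q)" for M
    using nF sN unfolding F6_def cN_def by (meson not_le)
  have col: "summable (\<lambda>n. norm (G n k))" for k
  proof -
    have "summable (\<lambda>j. norm (if j \<in> {k} then 1 else (0::complex)) powr p)"
      by (rule summable_finite[of "{k}"]) auto
    from H[OF this] show ?thesis using ind_Gapp[OF LT, of "{k}"] by simp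
  qed
  define R where "R w = (\<forall>m. (\<Sum>k<m. norm (w k) powr p) \<le> 1)" for w :: "nat \<Rightarrow> complex"
  have Rres: "R (\<lambda>k. if b < k then w k else 0)" if "R w" for w b
    unfolding R_def
  proof
    fix m
    have "(\<Sum>k<m. norm (if b < k then w k else 0) powr p) \<le> (\<Sum>k<m. norm (w k) powr p)"
      by (intro sum_mono) auto
    also have "\<dots> \<le> 1" using that by (simp add: R_def)
    finally show "(\<Sum>k<m. norm (if b < k then w k else 0) powr p) \<le> 1" .
  qed
  have large: "\<exists>N w e. finite N \<and> (\<forall>k>e. w k = 0) \<and> (\<forall>k. norm (w k) \<le> 1) \<and> R w
       \<and> L \<le> norm (\<Sum>n\<in>N. Gapp G w n)" for L
  proof -
    define L' where "L' = max L 1"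
    obtain N where N: "finite N" "L' powr q < (\<Sum>k. norm (cN N k) powr q)" using unb by blast
    define c where "c k = cN N k" for k
    define e where "e = Max (insert 0 N)"
    define Q where "Q = (\<Sum>k. norm (c k) powr q)"
    have c0: "c k = 0" if "e < k" for k using cN0[OF N(1)] that by (simp add: c_def e_def)
    have QN: "Q = (\<Sum>k. norm (cN N k) powr q)" by (simp add: Q_def c_def)
    have "0 \<le> L' powr q" by simp
    then have Q0: "0 < Q" using N(2) QN by linarith
    have Qfin: "Q = (\<Sum>k\<le>e. norm (c k) powr q)"
      unfolding Q_def by (rule suminf_finite) (use c0 in auto)
    have sc: "summable (\<lambda>k. norm (c k) powr q)" using sN[OF N(1)] by (simp add: c_def)
    have single: "norm (c k) powr q \<le> Q" for k
      using sum_le_suminf[OF sc, of "{k}"] by (simp add: Q_def)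
    define u where "u k = cnj (c k) * of_real (norm (c k) powr (q - 2))" for k
    define w where "w k = u k / of_real (Q powr (1/p))" for k
    have QP: "0 < Q powr (1/p)" using Q0 by simp
    have nw: "norm (w k) powr p = norm (c k) powr q / Q" for k
    proof -
      have "norm (w k) = norm (c k) powr (q - 1) / Q powr (1/p)"
        using dual_vec(2)[OF q, of "c k"] QP by (simp add: w_def u_def norm_divide)
      then have "norm (w k) powr p = (norm (c k) powr (q - 1)) powr p / (Q powr (1/p)) powr p"
        by (simp add: powr_divide)
      also have "\<dots> = norm (c k) powr q / Q" using p Q0 by (simp add: powr_powr qp)
      finally show ?thesis .
    qed
    have wle: "norm (w k) \<le> 1" for k
    proof (rule ccontr)
      assume "\<not> norm (w k) \<le> 1"
      then have "1 powr p < norm (w k) powr p" using p by (intro powr_less_mono2) auto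
      then have "Q < norm (c k) powr q" using nw[of k] Q0 by (simp add: less_divide_eq)
      then show False using single[of k] by simp
    qed
    have Rw: "R w" unfolding R_def
    proof
      fix m
      have "(\<Sum>k<m. norm (w k) powr p) = (\<Sum>k<m. norm (c k) powr q) / Q"
        by (simp add: nw sum_divide_distrib)
      also have "\<dots> \<le> Q / Q" using Q0 sum_le_suminf[OF sc, of "{..<m}"]
        by (intro divide_right_mono) (auto simp: Q_def)
      finally show "(\<Sum>k<m. norm (w k) powr p) \<le> 1" using Q0 by simp
    qed
    have w0: "\<forall>k>e. w k = 0"
    proof (intro allI impI)
      fix k assume "e < k"
      then have "c k = 0" by (rule c0)
      then show "w k = 0" by (simp add: w_def u_def)
    qed
    have "(\<Sum>n\<in>N. Gapp G w n) = (\<Sum>k\<le>e. w k * c k)"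
      using Gapp_sum_swap[OF LT w0] by (simp add: c_def cN_def)
    also have "\<dots> = (\<Sum>k\<le>e. of_real (norm (c k) powr q) / of_real (Q powr (1/p)))"
    proof (intro sum.cong refl)
      fix k
      have "c k * u k = of_real (norm (c k) powr q)" unfolding u_def by (rule dual_vec(1)[OF q])
      then show "w k * c k = of_real (norm (c k) powr q) / of_real (Q powr (1/p))"
        by (simp add: w_def mult.commute)
    qed
    also have "\<dots> = of_real (Q / Q powr (1/p))"
      by (simp add: Qfin sum_divide_distrib)
    finally have v: "(\<Sum>n\<in>N. Gapp G w n) = of_real (Q / Q powr (1/p))" .
    have "norm (\<Sum>n\<in>N. Gapp G w n) = \<bar>Q / Q powr (1/p)\<bar>" unfolding v by (rule norm_of_real)
    then have val: "norm (\<Sum>n\<in>N. Gapp G w n) = Q / Q powr (1/p)" using Q0 by simp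
    have "Q / Q powr (1/p) = Q powr (1/q)"
    proof -
      have "Q powr (1 - 1/p) = Q powr 1 / Q powr (1/p)" by (rule powr_diff)
      then show ?thesis using Q0 pq' by simp
    qed
    also have "L' < Q powr (1/q)"
    proof -
      have "(L' powr q) powr (1/q) < Q powr (1/q)"
        using N(2) q QN by (intro powr_less_mono2) auto
      moreover have "(L' powr q) powr (1/q) = L'" using q by (simp add: powr_powr L'_def)
      ultimately show ?thesis by simp
    qed
    finally have "L \<le> norm (\<Sum>n\<in>N. Gapp G w n)" using val by (simp add: L'_def)
    then show ?thesis using N(1) w0 wle Rw by blast
  qed
  define \<beta> where "\<beta> j = (1/2::real) ^ j" for j
  have bpos: "0 < \<beta> j" and ble: "\<beta> j \<le> 1" for j by (auto simp: \<beta>_def power_le_one)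
  obtain y bb Z where GH: "strict_mono bb" "bb 0 = 0" "\<forall>j. R (Z j)" "\<forall>j k. norm (Z j k) \<le> 1"
     "\<forall>j k. Z j k \<noteq> 0 \<longrightarrow> bb j < k \<and> k \<le> bb (Suc j)"
     "y 0 = 0" "\<forall>j k. bb j < k \<and> k \<le> bb (Suc j) \<longrightarrow> y k = of_real (\<beta> j) * Z j k"
     "\<not> summable (\<lambda>n. norm (Gapp G y n))"
    using gliding_hump[OF LT col, of \<beta> R, OF bpos ble Rres large] by blast
  have blk: "(\<Sum>k\<le>bb m. norm (y k) powr p) \<le> (\<Sum>j<m. \<beta> j)" for m
  proof (induction m)
    case 0
    then show ?case using GH(2,6) p by simp
  next
    case (Suc m)
    have lt: "bb m < bb (Suc m)" using GH(1) by (simp add: strict_mono_def)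
    have split: "{..bb (Suc m)} = {..bb m} \<union> {bb m<..bb (Suc m)}" using lt by auto
    have "(\<Sum>k\<in>{bb m<..bb (Suc m)}. norm (y k) powr p)
        = (\<Sum>k\<in>{bb m<..bb (Suc m)}. \<beta> m powr p * norm (Z m k) powr p)"
    proof (intro sum.cong refl)
      fix k assume "k \<in> {bb m<..bb (Suc m)}"
      then have "y k = of_real (\<beta> m) * Z m k" using GH(7) by auto
      then show "norm (y k) powr p = \<beta> m powr p * norm (Z m k) powr p"
        using bpos[of m] by (simp add: norm_mult powr_mult)
    qed
    also have "\<dots> = \<beta> m powr p * (\<Sum>k\<in>{bb m<..bb (Suc m)}. norm (Z m k) powr p)"
      by (simp add: sum_distrib_left)
    also have "\<dots> \<le> \<beta> m powr p * 1"
    proof (intro mult_left_mono)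
      have "(\<Sum>k\<in>{bb m<..bb (Suc m)}. norm (Z m k) powr p) \<le> (\<Sum>k<Suc (bb (Suc m)). norm (Z m k) powr p)"
        by (intro sum_mono2) auto
      also have "\<dots> \<le> 1" using GH(3) unfolding R_def by blast
      finally show "(\<Sum>k\<in>{bb m<..bb (Suc m)}. norm (Z m k) powr p) \<le> 1" .
    qed simp
    also have "\<dots> \<le> \<beta> m powr 1" using p bpos[of m] ble[of m] using powr_mono'[of 1 p "\<beta> m"] by simp
    also have "\<dots> = \<beta> m" using bpos[of m] by simp
    finally have b: "(\<Sum>k\<in>{bb m<..bb (Suc m)}. norm (y k) powr p) \<le> \<beta> m" .
    have "(\<Sum>k\<le>bb (Suc m). norm (y k) powr p)
        = (\<Sum>k\<le>bb m. norm (y k) powr p) + (\<Sum>k\<in>{bb m<..bb (Suc m)}. norm (y k) powr p)"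
      unfolding split by (rule sum.union_disjoint) auto
    also have "\<dots> \<le> (\<Sum>j<m. \<beta> j) + \<beta> m" using Suc.IH b by linarith
    finally show ?case by simp
  qed
  have geo: "(\<Sum>j<m. \<beta> j) \<le> 2" for m
  proof -
    have "(\<Sum>j<m. \<beta> j) \<le> (\<Sum>j. \<beta> j)"
      unfolding \<beta>_def by (intro sum_le_suminf summable_geometric) auto
    also have "(\<Sum>j. \<beta> j) = 2" unfolding \<beta>_def using suminf_geometric[of "1/2::real"] by simp
    finally show ?thesis .
  qed
  have "summable (\<lambda>k. norm (y k) powr p)"
  proof (rule summableI_nonneg_bounded)
    fix m
    have "(\<Sum>k<m. norm (y k) powr p) \<le> (\<Sum>k\<le>bb m. norm (y k) powr p)"
      using seq_suble[OF GH(1), of m] by (intro sum_mono2) auto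
    also have "\<dots> \<le> 2" using blk[of m] geo[of m] by linarith
    finally show "(\<Sum>k<m. norm (y k) powr p) \<le> 2" .
  qed simp
  then show False using H GH(8) by blast
qed



definition ee :: "real \<Rightarrow> real \<Rightarrow> real \<Rightarrow> nat \<Rightarrow> complex" where
  "ee r s t m = (\<Sum>v=0..m. rho1 r s t ^ (m - v) * rho2 r s t ^ v)"

lemma dmat_ee: "dmat r s t n k = (if k \<le> n then ee r s t (n - k) / of_real r else 0)"
  by (simp add: dmat_def ee_def)

lemma ee_0: "ee r s t 0 = 1" by (simp add: ee_def)

lemma ee_Suc: "ee r s t (Suc m) = rho2 r s t ^ Suc m + rho1 r s t * ee r s t m"
proof -
  have "ee r s t (Suc m) = (\<Sum>v=0..m. rho1 r s t ^ (Suc m - v) * rho2 r s t ^ v) + rho2 r s t ^ Suc m"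
    by (simp add: ee_def)
  also have "(\<Sum>v=0..m. rho1 r s t ^ (Suc m - v) * rho2 r s t ^ v) = rho1 r s t * ee r s t m"
    unfolding ee_def sum_distrib_left
    by (intro sum.cong refl) (simp add: Suc_diff_le)
  finally show ?thesis by simp
qed

lemma rho_sum: "r \<noteq> 0 \<Longrightarrow> rho1 r s t + rho2 r s t = - of_real s / of_real r"
  by (simp add: rho1_def rho2_def field_simps)

lemma rho_prod: "r \<noteq> 0 \<Longrightarrow> rho1 r s t * rho2 r s t = of_real t / of_real r"
proof -
  assume r: "r \<noteq> 0"
  define C where "C = csqrt (complex_of_real (s\<^sup>2 - 4*t*r))"
  have C2: "C^2 = of_real s ^ 2 - 4 * of_real t * of_real r" by (simp add: C_def)
  have "rho1 r s t * rho2 r s t = (of_real s ^ 2 - C^2) / (4 * of_real r ^ 2)"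
    unfolding rho1_def rho2_def C_def[symmetric] using r
    by (simp add: field_simps power2_eq_square)
  also have "\<dots> = of_real t / of_real r" unfolding C2 using r
    by (simp add: field_simps power2_eq_square)
  finally show ?thesis .
qed

lemma ee_rec:
  assumes r: "r \<noteq> 0"
  shows "of_real r * ee r s t (Suc (Suc m)) + of_real s * ee r s t (Suc m) + of_real t * ee r s t m = 0"
proof -
  let ?a = "rho1 r s t" and ?b = "rho2 r s t"
  have e2: "ee r s t (Suc (Suc m)) = (?a + ?b) * ee r s t (Suc m) - ?a * ?b * ee r s t m"
    by (simp add: ee_Suc algebra_simps)
  show ?thesis unfolding e2 rho_sum[OF r] rho_prod[OF r] using r by (simp add: field_simps)
qed

lemma ee_1: "r \<noteq> 0 \<Longrightarrow> of_real r * ee r s t 1 + of_real s = 0"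
  using rho_sum[of r s t] by (simp add: ee_Suc ee_0 field_simps)

lemma dmat_coef:
  assumes r: "r \<noteq> 0" and kn: "k \<le> n"
  shows "of_real r * dmat r s t n k + of_real s * (if 1 \<le> n then dmat r s t (n - 1) k else 0)
         + of_real t * (if 2 \<le> n then dmat r s t (n - 2) k else 0) = (if k = n then 1 else 0)"
proof -
  obtain m where n: "n = k + m" using kn le_Suc_ex by blast
  have rc: "(of_real r :: complex) \<noteq> 0" using r by simp
  show ?thesis
  proof (cases m)
    case 0
    then have "n = k" using n by simp
    then show ?thesis using rc by (auto simp: dmat_ee ee_0)
  next
    case (Suc m')
    show ?thesis
    proof (cases m')
      case 0
      then have nk: "n = Suc k" using n Suc by simp
      have "of_real r * (ee r s t 1 / of_real r) + of_real s * (1 / of_real r) = (of_real r * ee r s t 1 + of_real s) / (of_real r :: complex)"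
        using rc by (simp add: add_divide_distrib)
      also have "\<dots> = 0" using ee_1[OF r, of s t] by simp
      finally have *: "of_real r * (ee r s t 1 / of_real r) + of_real s * (1 / of_real r) = (0::complex)" .
      show ?thesis using * r unfolding nk by (auto simp: dmat_ee ee_0)
    next
      case (Suc m'')
      have nk: "n = Suc (Suc (k + m''))" using n \<open>m = Suc m'\<close> Suc by simp
      have "of_real r * (ee r s t (Suc (Suc m'')) / of_real r) + of_real s * (ee r s t (Suc m'') / of_real r)
          + of_real t * (ee r s t m'' / of_real r)
          = (of_real r * ee r s t (Suc (Suc m'')) + of_real s * ee r s t (Suc m'') + of_real t * ee r s t m'') / (of_real r :: complex)"
        using rc by (simp add: add_divide_distrib)
      also have "\<dots> = 0" using ee_rec[OF r, of s t m''] by simp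
      finally have *: "of_real r * (ee r s t (Suc (Suc m'')) / of_real r) + of_real s * (ee r s t (Suc m'') / of_real r)
          + of_real t * (ee r s t m'' / of_real r) = (0::complex)" .
      have d: "n - k = Suc (Suc m'')" "n - 1 - k = Suc m''" "n - 2 - k = m''" using nk by auto
      show ?thesis using * d nk by (simp add: dmat_ee)
    qed
  qed
qed

definition Bop :: "real \<Rightarrow> real \<Rightarrow> real \<Rightarrow> (nat \<Rightarrow> complex) \<Rightarrow> nat \<Rightarrow> complex" where
  "Bop r s t x k = of_real r * x k + of_real s * shift x 1 k + of_real t * shift x 2 k"

definition Dop :: "real \<Rightarrow> real \<Rightarrow> real \<Rightarrow> (nat \<Rightarrow> complex) \<Rightarrow> nat \<Rightarrow> complex" where
  "Dop r s t u n = (\<Sum>k\<le>n. dmat r s t n k * u k)"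

lemma Dop_ext: "j \<le> n \<Longrightarrow> Dop r s t u j = (\<Sum>k\<le>n. dmat r s t j k * u k)"
  unfolding Dop_def by (intro sum.mono_neutral_left) (auto simp: dmat_def)

lemma Bop_Dop: assumes r: "r \<noteq> 0" shows "Bop r s t (Dop r s t u) n = u n"
proof -
  have s1: "shift (Dop r s t u) 1 n = (\<Sum>k\<le>n. (if 1 \<le> n then dmat r s t (n - 1) k else 0) * u k)"
    by (simp add: shift_def Dop_ext)
  have s2: "shift (Dop r s t u) 2 n = (\<Sum>k\<le>n. (if 2 \<le> n then dmat r s t (n - 2) k else 0) * u k)"
    by (simp add: shift_def Dop_ext)
  have "Bop r s t (Dop r s t u) n = (\<Sum>k\<le>n. (of_real r * dmat r s t n k + of_real s * (if 1 \<le> n then dmat r s t (n - 1) k else 0)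
         + of_real t * (if 2 \<le> n then dmat r s t (n - 2) k else 0)) * u k)"
    unfolding Bop_def s1 s2 by (simp add: Dop_def sum_distrib_left sum.distrib algebra_simps)
  also have "\<dots> = (\<Sum>k\<le>n. (if k = n then 1 else 0) * u k)"
  proof (intro sum.cong refl)
    fix k assume "k \<in> {..n}"
    then have "k \<le> n" by simp
    then show "(of_real r * dmat r s t n k + of_real s * (if 1 \<le> n then dmat r s t (n - 1) k else 0)
         + of_real t * (if 2 \<le> n then dmat r s t (n - 2) k else 0)) * u k = (if k = n then 1 else 0) * u k"
      by (subst dmat_coef[OF r]) auto
  qed
  also have "\<dots> = (\<Sum>k\<le>n. if k = n then u k else 0)" by (intro sum.cong) auto
  also have "\<dots> = u n" by simp
  finally show ?thesis .
qed

lemma fmat_a: "fmat r s t lam a n k = fmat r s t lam (\<lambda>_. 1) n k * a n"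
  by (simp add: fmat_def)

lemma Gapp_fmat: "Gapp (fmat r s t lam a) y n = a n * Gapp (fmat r s t lam (\<lambda>_. 1)) y n"
  unfolding Gapp_def by (subst fmat_a) (simp add: sum_distrib_left mult_ac)

definition Dl :: "(nat \<Rightarrow> real) \<Rightarrow> nat \<Rightarrow> real" where
  "Dl lam k = lam k - lam_prev lam k"

definition Lam :: "(nat \<Rightarrow> real) \<Rightarrow> (nat \<Rightarrow> complex) \<Rightarrow> nat \<Rightarrow> complex" where
  "Lam lam z n = of_real (1 / lam n) * (\<Sum>k\<le>n. of_real (Dl lam k) * z k)"

definition Linv :: "(nat \<Rightarrow> real) \<Rightarrow> (nat \<Rightarrow> complex) \<Rightarrow> nat \<Rightarrow> complex" where
  "Linv lam y k = (of_real (lam k) * y k - of_real (lam_prev lam k) * shift y 1 k) / of_real (Dl lam k)"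

lemma lam_prev_0: "lam_prev lam 0 = 0" by (simp add: lam_prev_def shift_def)
lemma lam_prev_Suc: "lam_prev lam (Suc k) = lam k" by (simp add: lam_prev_def shift_def)
lemma shift1_0: "shift y 1 0 = 0" "shift y (Suc 0) 0 = 0" by (simp_all add: shift_def)
lemma shift1_Suc: "shift y 1 (Suc k) = y k" "shift y (Suc 0) (Suc k) = y k" by (simp_all add: shift_def)

lemma What_Lam: "What r s t lam x = Lam lam (Bop r s t x)"
  by (simp add: fun_eq_iff What_def Lam_def Bop_def Dl_def atLeast0AtMost)

context
  fixes r s t :: real and lam :: "nat \<Rightarrow> real"
  assumes r: "r \<noteq> 0" and sm: "strict_mono lam" and lpos: "\<forall>k. 0 < lam k"
begin

lemma Dl_pos: "0 < Dl lam k"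
proof (cases k)
  case 0 then show ?thesis using lpos by (simp add: Dl_def lam_prev_0)
next
  case (Suc j) then show ?thesis using sm by (simp add: Dl_def lam_prev_Suc strict_mono_def)
qed

lemma Dl_ne: "Dl lam k \<noteq> 0" using Dl_pos[of k] by simp

lemma tele: "(\<Sum>k\<le>n. of_real (lam k) * y k - of_real (lam_prev lam k) * shift y 1 k) = of_real (lam n) * (y n :: complex)"
  by (induction n) (simp_all add: lam_prev_0 lam_prev_Suc shift1_0 shift1_Suc)

lemma Lam_Linv: "Lam lam (Linv lam y) n = y n"
proof -
  have "(\<Sum>k\<le>n. of_real (Dl lam k) * Linv lam y k) = (\<Sum>k\<le>n. of_real (lam k) * y k - of_real (lam_prev lam k) * shift y 1 k)"
    by (intro sum.cong refl) (use Dl_ne in \<open>simp add: Linv_def\<close>)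
  also have "\<dots> = of_real (lam n) * y n" by (rule tele)
  moreover have "lam n \<noteq> 0" using lpos by (metis less_irrefl)
  ultimately show ?thesis by (simp add: Lam_def)
qed

lemma Dop_Linv: "Dop r s t (Linv lam y) n = Gapp (fmat r s t lam (\<lambda>_. 1)) y n"
proof -
  define h where "h k = dmat r s t n k * of_real (lam_prev lam k / Dl lam k) * shift y 1 k" for k
  have "Dop r s t (Linv lam y) n = (\<Sum>k\<le>n. dmat r s t n k * of_real (lam k / Dl lam k) * y k) - (\<Sum>k\<le>n. h k)"
    unfolding Dop_def h_def Linv_def sum_subtractf[symmetric]
    by (intro sum.cong refl) (simp add: diff_divide_distrib algebra_simps)
  also have "(\<Sum>k\<le>n. h k) = (\<Sum>k\<le>n. h (Suc k))"
  proof -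
    have "(\<Sum>k\<le>Suc n. h k) = h 0 + (\<Sum>k\<le>n. h (Suc k))" by (rule sum.atMost_Suc_shift)
    moreover have "h 0 = 0" by (simp add: h_def shift1_0)
    moreover have "h (Suc n) = 0" by (simp add: h_def dmat_def)
    ultimately show ?thesis by simp
  qed
  also have "(\<Sum>k\<le>n. h (Suc k)) = (\<Sum>k\<le>n. dmat r s t n (Suc k) * of_real (lam k / Dl lam (Suc k)) * y k)"
    by (simp add: h_def lam_prev_Suc shift1_Suc)
  also have "(\<Sum>k\<le>n. dmat r s t n k * of_real (lam k / Dl lam k) * y k) - \<dots>
      = (\<Sum>k\<le>n. (dmat r s t n k * of_real (lam k / Dl lam k) - dmat r s t n (Suc k) * of_real (lam k / Dl lam (Suc k))) * y k)"
    by (simp add: sum_subtractf[symmetric] algebra_simps)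
  also have "\<dots> = Gapp (fmat r s t lam (\<lambda>_. 1)) y n"
    unfolding Gapp_def
  proof (intro sum.cong refl)
    fix k assume "k \<in> {..n}"
    then consider "k < n" | "k = n" by fastforce
    then show "(dmat r s t n k * of_real (lam k / Dl lam k) - dmat r s t n (Suc k) * of_real (lam k / Dl lam (Suc k))) * y k
        = fmat r s t lam (\<lambda>_. 1) n k * y k"
    proof cases
      case 1 then show ?thesis by (simp add: fmat_def Dl_def lam_prev_Suc)
    next
      case 2 then show ?thesis by (simp add: fmat_def Dl_def dmat_def)
    qed
  qed
  finally show ?thesis .
qed

lemma What_Xinv: "What r s t lam (\<lambda>n. Gapp (fmat r s t lam (\<lambda>_. 1)) y n) = y"
proof -
  have "(\<lambda>n. Gapp (fmat r s t lam (\<lambda>_. 1)) y n) = Dop r s t (Linv lam y)"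
    by (simp add: fun_eq_iff Dop_Linv)
  moreover have "Bop r s t (Dop r s t (Linv lam y)) = Linv lam y" by (rule ext) (rule Bop_Dop[OF r])
  moreover have "Lam lam (Linv lam y) = y" by (rule ext) (rule Lam_Linv)
  ultimately show ?thesis by (simp only: What_Lam)
qed

lemma Lam_inj: assumes "Lam lam z = Lam lam z'" shows "z = z'"
proof -
  have S: "(\<Sum>k\<le>n. of_real (Dl lam k) * z k) = (\<Sum>k\<le>n. of_real (Dl lam k) * z' k)" for n
  proof -
    have "of_real (1 / lam n) * (\<Sum>k\<le>n. of_real (Dl lam k) * z k) = of_real (1 / lam n) * (\<Sum>k\<le>n. of_real (Dl lam k) * z' k)"
      using fun_cong[OF assms, of n] by (simp add: Lam_def)
    moreover have "(of_real (1 / lam n) :: complex) \<noteq> 0" using lpos by (simp add: less_imp_neq[symmetric])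
    ultimately show ?thesis by simp
  qed
  have D: "(of_real (Dl lam n) :: complex) \<noteq> 0" for n using Dl_pos[of n] by simp
  show ?thesis
  proof
    fix n
    show "z n = z' n"
    proof (cases n)
      case 0 then show ?thesis using S[of 0] D[of 0] by simp
    next
      case (Suc m)
      then show ?thesis using S[of "Suc m"] S[of m] D[of "Suc m"] by simp
    qed
  qed
qed

lemma Bop_inj: assumes "Bop r s t x = Bop r s t x'" shows "x = x'"
proof
  fix n show "x n = x' n"
  proof (induction n rule: less_induct)
    case (less n)
    have "shift x 1 n = shift x' 1 n" "shift x 2 n = shift x' 2 n"
      using less by (auto simp: shift_def)
    then have "of_real r * x n = of_real r * x' n"
      using fun_cong[OF assms, of n] by (simp add: Bop_def)
    then show ?case using r by simp
  qed
qed

lemma What_inj: assumes "What r s t lam x = What r s t lam x'" shows "x = x'"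
proof -
  have "Lam lam (Bop r s t x) = Lam lam (Bop r s t x')" using assms by (simp only: What_Lam)
  then have "Bop r s t x = Bop r s t x'" by (rule Lam_inj)
  then show ?thesis by (rule Bop_inj)
qed

lemma alpha_char:
  "alpha_dual {x. P (What r s t lam x)} = {a. \<forall>y. P y \<longrightarrow> summable (\<lambda>n. norm (Gapp (fmat r s t lam a) y n))}"
proof (intro equalityI subsetI)
  fix a assume a: "a \<in> alpha_dual {x. P (What r s t lam x)}"
  show "a \<in> {a. \<forall>y. P y \<longrightarrow> summable (\<lambda>n. norm (Gapp (fmat r s t lam a) y n))}"
  proof (intro CollectI allI impI)
    fix y assume "P y"
    then have m: "(\<lambda>n. Gapp (fmat r s t lam (\<lambda>_. 1)) y n) \<in> {x. P (What r s t lam x)}"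
      by (simp only: What_Xinv mem_Collect_eq)
    have "\<forall>x\<in>{x. P (What r s t lam x)}. summable (\<lambda>k. norm (a k * x k))"
      using a by (simp only: alpha_dual_def mem_Collect_eq)
    from bspec[OF this m] have "summable (\<lambda>k. norm (a k * Gapp (fmat r s t lam (\<lambda>_. 1)) y k))" .
    then show "summable (\<lambda>n. norm (Gapp (fmat r s t lam a) y n))" by (simp only: Gapp_fmat[of r s t lam a])
  qed
next
  fix a assume a: "a \<in> {a. \<forall>y. P y \<longrightarrow> summable (\<lambda>n. norm (Gapp (fmat r s t lam a) y n))}"
  show "a \<in> alpha_dual {x. P (What r s t lam x)}"
    unfolding alpha_dual_def
  proof (intro CollectI ballI)
    fix x assume x: "x \<in> {x. P (What r s t lam x)}"
    define y where "y = What r s t lam x"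
    have "What r s t lam (\<lambda>n. Gapp (fmat r s t lam (\<lambda>_. 1)) y n) = What r s t lam x"
      by (simp add: What_Xinv y_def)
    then have xe: "x = (\<lambda>n. Gapp (fmat r s t lam (\<lambda>_. 1)) y n)" by (rule What_inj[symmetric])
    have Py: "P y" using x by (simp add: y_def)
    have "\<forall>y. P y \<longrightarrow> summable (\<lambda>n. norm (Gapp (fmat r s t lam a) y n))" using a by (simp only: mem_Collect_eq)
    then have "summable (\<lambda>n. norm (Gapp (fmat r s t lam a) y n))" using Py by blast
    then show "summable (\<lambda>k. norm (a k * x k))" by (subst xe) (simp only: Gapp_fmat[of r s t lam a])
  qed
qed

end

theorem theorem8:
  fixes r s t :: real and lam :: "nat \<Rightarrow> real"
  assumes "r \<noteq> 0" and "s \<noteq> 0" and "t \<noteq> 0"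
    and "strict_mono lam" and "\<forall>k. 0 < lam k"
    and "filterlim lam at_top sequentially"
  shows "alpha_dual (c0_lam r s t lam) = f1_lam r s t lam
       \<and> alpha_dual (c_lam r s t lam) = f1_lam r s t lam
       \<and> alpha_dual (linf_lam r s t lam) = f1_lam r s t lam
       \<and> (\<forall>p q. 1 < p \<and> 1/p + 1/q = 1 \<longrightarrow>
            alpha_dual (lp_lam p r s t lam) = f6_lam q r s t lam)"
proof -
  have LTf: "LT (fmat r s t lam a)" for a by (simp add: LT_def fmat_def)
  have f1eq: "f1_lam r s t lam = {a. F1 (fmat r s t lam a)}" by (simp add: f1_lam_def F1_def)
  have f6eq: "f6_lam q r s t lam = {a. F6 q (fmat r s t lam a)}" for q by (simp add: f6_lam_def F6_def)
  define S where "S P = {a. \<forall>y. P y \<longrightarrow> summable (\<lambda>n. norm (Gapp (fmat r s t lam a) y n))}"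
    for P :: "(nat \<Rightarrow> complex) \<Rightarrow> bool"
  have AC: "alpha_dual {x. P (What r s t lam x)} = S P" for P
    unfolding S_def by (rule alpha_char[OF assms(1,4,5)])
  have c0: "alpha_dual (c0_lam r s t lam) = S (\<lambda>y. y \<longlonglongrightarrow> 0)"
    using AC[of "\<lambda>y. y \<longlonglongrightarrow> 0"] by (simp add: c0_lam_def)
  have cc: "alpha_dual (c_lam r s t lam) = S convergent"
    using AC[of convergent] by (simp add: c_lam_def)
  have ci: "alpha_dual (linf_lam r s t lam) = S Bseq"
    using AC[of Bseq] by (simp add: linf_lam_def)
  have cp: "alpha_dual (lp_lam p r s t lam) = S (\<lambda>y. summable (\<lambda>n. norm (y n) powr p))" for p
    using AC[of "\<lambda>y. summable (\<lambda>n. norm (y n) powr p)"] by (simp add: lp_lam_def)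
  have A1: "S (\<lambda>y. y \<longlonglongrightarrow> 0) \<subseteq> f1_lam r s t lam"
  proof
    fix a assume "a \<in> S (\<lambda>y. y \<longlonglongrightarrow> 0)"
    then have "\<And>y. y \<longlonglongrightarrow> 0 \<Longrightarrow> summable (\<lambda>n. norm (Gapp (fmat r s t lam a) y n))"
      by (simp add: S_def)
    then have "F1 (fmat r s t lam a)" by (rule T1[OF LTf])
    then show "a \<in> f1_lam r s t lam" by (simp add: f1eq)
  qed
  have A2: "f1_lam r s t lam \<subseteq> S Bseq"
  proof
    fix a assume "a \<in> f1_lam r s t lam"
    then have "F1 (fmat r s t lam a)" by (simp add: f1eq)
    then show "a \<in> S Bseq" unfolding S_def using T2[OF LTf] by blast
  qed
  have A3: "S Bseq \<subseteq> S convergent" unfolding S_def using convergent_imp_Bseq by blast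
  have A4: "S convergent \<subseteq> S (\<lambda>y. y \<longlonglongrightarrow> 0)" unfolding S_def using convergentI by blast
  have E: "S (\<lambda>y. y \<longlonglongrightarrow> 0) = f1_lam r s t lam" "S convergent = f1_lam r s t lam" "S Bseq = f1_lam r s t lam"
    using A1 A2 A3 A4 by blast+
  have P: "alpha_dual (lp_lam p r s t lam) = f6_lam q r s t lam" if pq: "1 < p" "1/p + 1/q = 1" for p q
  proof -
    have "S (\<lambda>y. summable (\<lambda>n. norm (y n) powr p)) = f6_lam q r s t lam"
    proof (intro equalityI subsetI)
      fix a assume "a \<in> S (\<lambda>y. summable (\<lambda>n. norm (y n) powr p))"
      then have "\<And>y. summable (\<lambda>n. norm (y n) powr p) \<Longrightarrow> summable (\<lambda>n. norm (Gapp (fmat r s t lam a) y n))"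
        by (simp add: S_def)
      then have "F6 q (fmat r s t lam a)" by (rule T3[OF LTf pq])
      then show "a \<in> f6_lam q r s t lam" by (simp add: f6eq)
    next
      fix a assume "a \<in> f6_lam q r s t lam"
      then have "F6 q (fmat r s t lam a)" by (simp add: f6eq)
      then show "a \<in> S (\<lambda>y. summable (\<lambda>n. norm (y n) powr p))"
        unfolding S_def using T4[OF LTf pq] by blast
    qed
    then show ?thesis using cp[of p] by simp
  qed
  show ?thesis using c0 cc ci E P by auto
qed

end
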